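(* Let $n\equiv 1$ or $5 \pmod 6$, let $(\mathbb{Z}_{2n},B)$ be any SQS$(2n)$, and let $B_0,\dots,B_{2n-1}$ be the $2n$ collections of quadruples on $\mathbb{Z}_{2n}\times\mathbb{Z}_2$ obtained by the DLS construction from $(\mathbb{Z}_{2n},B)$ and the Latin square $M_n$. A quadruple $\{(v,0),(x,0),(y,1),(z,1)\}$ (with $v\ne x$, $y\ne z$ in $\{0,\dots,2n-1\}$) is contained in $B_0\cup\dots\cup B_{2n-1}$ if and only if either (a) there is $i$ with $1\le i\le \frac{n-1}{2}$ such that $\{v,x\}\in\mathcal{A}_i\cup\mathcal{B}_i$ and $\{y,z\}\in\mathcal{A}_i\cup\mathcal{B}_i$, or (b) there is $i$ with $0\le i\le n-1$ such that $\{v,x\}\in\mathcal{C}_i$ and $\{y,z\}\in\mathcal{D}_{i-1}\cup\mathcal{D}_i$ (indices modulo $n$). Moreover each such quadruple is contained in exactly one of $B_0,\dots,B_{2n-1}$.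
   Context: Identify $\mathbb{Z}_{2n}$ with $\{0,1,\dots,2n-1\}$. Define, for $1\le i\le \frac{n-1}{2}$: $\mathcal{A}_i=\{\{x,y\}: x,y\in\{0,\dots,n-1\},\ y-x\equiv i \pmod n\}$ and $\mathcal{B}_i=\{\{x,y\}: x,y\in\{n,\dots,2n-1\},\ y-x\equiv i\pmod n\}$; for $0\le i\le n-1$: $\mathcal{C}_i=\{\{x,y\}: 0\le x\le n-1,\ n\le y\le 2n-1,\ x+y\equiv i\pmod n\}$ and $\mathcal{D}_i=\{\{x,y\}: 0\le x\le n-1,\ n\le y\le 2n-1,\ y-x\equiv i\pmod n\}$. The $2n\times 2n$ Latin square $M_n$ on $\{0,\dots,2n-1\}$, with rows and columns indexed by $0,\dots,2n-1$, is defined for $0\le r,c\le n-1$ by $M_n(r,c)=(r-c)\bmod n$, $M_n(r,n+c)=n+((r+c)\bmod n)$, $M_n(n+r,c)=n+((r+c-1)\bmod n)$, $M_n(n+r,n+c)=(r-c)\bmod n$, where $a\bmod n\in\{0,\dots,n-1\}$; it has no $2\times2$ subsquares. An SQS$(m)$ is a set of $m$ points with a collection of $4$-subsets such that each $3$-subset lies in exactly one of them. DLS construction with SQS $(\mathbb{Z}_v,B)$ and $v\times v$ Latin square $A$: for $i\in\mathbb{Z}_v$ let $\alpha_i(j)=A(i,j)$; $B_i$ consists of (1) for each block $\{x_1,x_2,x_3,x_4\}\in B$ and each choice of a distinguished element $x_k$ (others $x_a,x_b,x_c$), the quadruples $\{(x_a,0),(x_b,0),(x_c,0),(\alpha_i(x_k),1)\}$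 and $\{(x_a,1),(x_b,1),(x_c,1),(\alpha_i(x_k),0)\}$; (2) for each pair $\{x_1,x_2\}\subset\mathbb{Z}_v$ the quadruple $\{(x_1,0),(x_2,0),(\alpha_i(x_1),1),(\alpha_i(x_2),1)\}$. Here $v=2n$, $A=M_n$, and $B_r$ uses row $r$ of $M_n$. *)

theory Defs
  imports "HOL-Number_Theory.Cong"
begin

text \<open>Points of Z_v are identified with {0..<v}; Z_2 with {0,1} (as nat).\<close>

definition is_SQS :: "nat \<Rightarrow> nat set set \<Rightarrow> bool" where
  "is_SQS v B \<longleftrightarrow>
     (\<forall>b\<in>B. b \<subseteq> {0..<v} \<and> card b = 4) \<and>
     (\<forall>T. T \<subseteq> {0..<v} \<and> card T = 3 \<longrightarrow> (\<exists>!b. b \<in> B \<and> T \<subseteq> b))"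

definition M :: "nat \<Rightarrow> nat \<Rightarrow> nat \<Rightarrow> nat" where
  "M n r c =
    (if r < n \<and> c < n then nat ((int r - int c) mod int n)
     else if r < n then n + nat ((int r + int (c - n)) mod int n)
     else if c < n then n + nat ((int (r - n) + int c - 1) mod int n)
     else nat ((int (r - n) - int (c - n)) mod int n))"

definition DLS_block :: "nat \<Rightarrow> nat set set \<Rightarrow> (nat \<Rightarrow> nat \<Rightarrow> nat) \<Rightarrow> nat \<Rightarrow> (nat \<times> nat) set set" where
  "DLS_block v B A i =
     {(\<lambda>t. (t, 0::nat)) ` (b - {k}) \<union> {(A i k, 1)} | b k. b \<in> B \<and> k \<in> b}
   \<union> {(\<lambda>t. (t, 1::nat)) ` (b - {k}) \<union> {(A i k, 0)} | b k. b \<in> B \<and> k \<in> b}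
   \<union> {{(x1, 0), (x2, 0), (A i x1, 1), (A i x2, 1)} | x1 x2.
         x1 < v \<and> x2 < v \<and> x1 \<noteq> x2}"

definition A_cls :: "nat \<Rightarrow> int \<Rightarrow> nat set set" where
  "A_cls n i = {{x, y} | x y. x < n \<and> y < n \<and> [int y - int x = i] (mod int n)}"

definition B_cls :: "nat \<Rightarrow> int \<Rightarrow> nat set set" where
  "B_cls n i = {{x, y} | x y. n \<le> x \<and> x < 2*n \<and> n \<le> y \<and> y < 2*n
                   \<and> [int y - int x = i] (mod int n)}"

definition C_cls :: "nat \<Rightarrow> int \<Rightarrow> nat set set" where
  "C_cls n i = {{x, y} | x y. x < n \<and> n \<le> y \<and> y < 2*n \<and> [int x + int y = i] (mod int n)}"

definition D_cls :: "nat \<Rightarrow> int \<Rightarrow> nat set set" where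
  "D_cls n i = {{x, y} | x y. x < n \<and> n \<le> y \<and> y < 2*n \<and> [int y - int x = i] (mod int n)}"

end

theory Submission imports Defs begin

definition phi :: "nat \<Rightarrow> nat \<Rightarrow> nat \<Rightarrow> int" where
  "phi n r c = (if r<n then (if c<n then int r - int c else int r + int c)
                else (if c<n then int r + int c - 1 else int r - int c))"

lemma mod_dvd_aux: "(k::int) dvd (a mod k - a)"
  by (metis dvd_minus_iff dvd_triv_left minus_diff_eq minus_mod_eq_mult_div)

lemma M_cong:
  assumes "r < 2*n" "c < 2*n"
  shows "int n dvd (int (M n r c) - phi n r c)"
proof -
  have nn: "0 \<le> t mod int n" if "n>0" for t using that by simp
  have "n > 0" using assms by auto
  show ?thesis
  proof (cases "r<n")
    case True
    show ?thesis
    proof (cases "c<n")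
      case True
      then show ?thesis using \<open>r<n\<close> \<open>n>0\<close> mod_dvd_aux[of "int n" "int r - int c"]
        by (simp add: M_def phi_def)
    next
      case False
      have e: "int (c - n) = int c - int n" using False by simp
      have "int n dvd (int n + (int r + int c - int n) mod int n - (int r + int c))"
        using mod_dvd_aux[of "int n" "int r + int c - int n"] by (simp add: algebra_simps)
      then show ?thesis using \<open>r<n\<close> False \<open>n>0\<close> e
        by (simp add: M_def phi_def algebra_simps)
    qed
  next
    case rF: False
    have e: "int (r - n) = int r - int n" using rF by simp
    show ?thesis
    proof (cases "c<n")
      case True
      have "int n dvd (int n + (int r - int n + int c - 1) mod int n - (int r + int c - 1))"
        using mod_dvd_aux[of "int n" "int r - int n + int c - 1"] by (simp add: algebra_simps)
      then show ?thesis using rF True \<open>n>0\<close> e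
        by (simp add: M_def phi_def algebra_simps)
    next
      case False
      have e2: "int (c - n) = int c - int n" using False by simp
      have "int n dvd ((int r - int n - (int c - int n)) mod int n - (int r - int c))"
        using mod_dvd_aux[of "int n" "int r - int n - (int c - int n)"] by (simp add: algebra_simps)
      then show ?thesis using rF False \<open>n>0\<close> e e2
        by (simp add: M_def phi_def algebra_simps)
    qed
  qed
qed

lemma nat_mod_lt: "0 < n \<Longrightarrow> nat (t mod int n) < n"
  by (simp add: nat_less_iff)

lemma M_half:
  assumes "r < 2*n" "c < 2*n"
  shows "M n r c < 2*n \<and> (M n r c < n \<longleftrightarrow> (r<n \<longleftrightarrow> c<n))"
proof -
  have "n > 0" using assms by auto
  have "nat (t mod int n) < 2*n" for t using nat_mod_lt[OF \<open>n>0\<close>, of t] by linarith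
  then show ?thesis using nat_mod_lt[OF \<open>n>0\<close>]
    by (auto simp: M_def)
qed

lemma half_unique:
  assumes "a < 2*n" "b < 2*n" "(a<n \<longleftrightarrow> b<n)" "int n dvd (int a - int b)"
  shows "a = b"
proof (rule ccontr)
  assume "a \<noteq> b"
  then have "int a - int b \<noteq> 0" by simp
  from dvd_imp_le_int[OF this assms(4)] have "int n \<le> \<bar>int a - int b\<bar>" by simp
  with assms(1-3) show False by (auto simp: abs_if split: if_splits)
qed

lemma col_inj:
  assumes "r < 2*n" "r' < 2*n" "c < 2*n" "M n r c = M n r' c"
  shows "r = r'"
proof -
  have h: "(r<n \<longleftrightarrow> r'<n)" using M_half[OF assms(1,3)] M_half[OF assms(2,3)] assms(4) by auto
  have "int n dvd ((int (M n r' c) - phi n r' c) - (int (M n r c) - phi n r c))"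
    using M_cong[OF assms(1,3)] M_cong[OF assms(2,3)] by (rule dvd_diff[rotated])
  then have "int n dvd (phi n r c - phi n r' c)" using assms(4) by simp
  then have "int n dvd (int r - int r')" using h by (cases "c<n") (auto simp: phi_def)
  then show ?thesis using half_unique assms h by blast
qed

lemma no_intercalate:
  assumes "odd n" "n > 1" "r < 2*n" "r' < 2*n" "v < 2*n" "x < 2*n" "v \<noteq> x"
    "M n r v = M n r' x" "M n r x = M n r' v"
  shows False
proof -
  have h1: "(r<n \<longleftrightarrow> v<n) = (r'<n \<longleftrightarrow> x<n)"
    using M_half[OF assms(3,5)] M_half[OF assms(4,6)] assms(8) by simp
  have h2: "(r<n \<longleftrightarrow> x<n) = (r'<n \<longleftrightarrow> v<n)"
    using M_half[OF assms(3,6)] M_half[OF assms(4,5)] assms(9) by simp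
  have E1: "int n dvd (phi n r v - phi n r' x)"
    using dvd_diff[OF M_cong[OF assms(4,6)] M_cong[OF assms(3,5)]] assms(8) by simp
  have E2: "int n dvd (phi n r x - phi n r' v)"
    using dvd_diff[OF M_cong[OF assms(4,5)] M_cong[OF assms(3,6)]] assms(9) by simp
  have E: "int n dvd ((phi n r v - phi n r' x) - (phi n r x - phi n r' v))"
    using dvd_diff[OF E1 E2] .
  have "int n dvd 1 \<or> int n dvd -1 \<or> (int n dvd (2*(int x - int v)) \<and> (v<n \<longleftrightarrow> x<n))
     \<or> (int n dvd (2*(int v - int x)) \<and> (v<n \<longleftrightarrow> x<n))"
    using h1 h2 E
    by (cases "r<n"; cases "r'<n"; cases "v<n"; cases "x<n") (simp_all add: phi_def algebra_simps)
  moreover have "\<not> int n dvd 1" using assms(2) by simp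
  moreover have "\<not> int n dvd -1" using assms(2) by simp
  moreover have cop: "coprime (int n) 2" using assms(1) by (simp add: coprime_commute)
  ultimately have X: "(int n dvd (2*(int x - int v)) \<or> int n dvd (2*(int v - int x))) \<and> (v<n \<longleftrightarrow> x<n)"
    by blast
  then have hv: "(v<n \<longleftrightarrow> x<n)" by blast
  have "int n dvd (int x - int v) \<or> int n dvd (int v - int x)"
    using X coprime_dvd_mult_right_iff[OF cop, of "int x - int v"] coprime_dvd_mult_right_iff[OF cop, of "int v - int x"]
    by blast
  then have "int n dvd (int x - int v)" by (metis dvd_minus_iff minus_diff_eq)
  then have "x = v" using half_unique[OF assms(6,5)] hv by auto
  then show False using assms(7) by simp
qed

lemma col_surj:
  assumes "c < 2*n" "t < 2*n" "(t<n \<longleftrightarrow> (hr \<longleftrightarrow> c<n))"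
  shows "\<exists>r<2*n. (r<n \<longleftrightarrow> hr) \<and> M n r c = t"
proof -
  define R where "R = (if hr then {0..<n} else {n..<2*n})"
  define T where "T = (if (hr \<longleftrightarrow> c<n) then {0..<n} else {n..<2*n})"
  have RR: "r \<in> R \<longleftrightarrow> r < 2*n \<and> (r<n \<longleftrightarrow> hr)" for r by (auto simp: R_def)
  have sub: "(\<lambda>r. M n r c) ` R \<subseteq> T"
  proof
    fix w assume "w \<in> (\<lambda>r. M n r c) ` R"
    then obtain r where "r \<in> R" "w = M n r c" by auto
    then show "w \<in> T" using M_half[of r n c] assms(1) RR[of r] by (auto simp: T_def)
  qed
  have inj: "inj_on (\<lambda>r. M n r c) R"
    by (rule inj_onI) (use col_inj assms(1) RR in blast)
  have "card ((\<lambda>r. M n r c) ` R) = card T"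
    using card_image[OF inj] by (simp add: R_def T_def)
  then have "(\<lambda>r. M n r c) ` R = T"
    using card_subset_eq[OF _ sub] by (simp add: T_def)
  moreover have "t \<in> T" using assms by (auto simp: T_def)
  ultimately obtain r where "r \<in> R" "M n r c = t" by force
  then show ?thesis using RR by blast
qed

lemma pair_exists:
  assumes "v < 2*n" "x < 2*n" "y < 2*n" "z < 2*n"
    "(y<n \<longleftrightarrow> (hr \<longleftrightarrow> v<n))" "(z<n \<longleftrightarrow> (hr \<longleftrightarrow> x<n))"
    "\<And>r. (r<n \<longleftrightarrow> hr) \<Longrightarrow> int n dvd (int z - int y - (phi n r x - phi n r v))"
  shows "\<exists>r<2*n. M n r v = y \<and> M n r x = z"
proof -
  obtain r where r: "r < 2*n" "(r<n \<longleftrightarrow> hr)" "M n r v = y"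
    using col_surj[OF assms(1,3,5)] by blast
  have d: "int n dvd (int z - int y - (phi n r x - phi n r v))" using assms(7) r(2) .
  have "int n dvd ((int (M n r x) - phi n r x) - (int (M n r v) - phi n r v) - (int z - int y - (phi n r x - phi n r v)))"
    using dvd_diff[OF dvd_diff[OF M_cong[OF r(1) assms(2)] M_cong[OF r(1) assms(1)]] d] .
  then have "int n dvd (int (M n r x) - int z)" using r(3) by (simp add: algebra_simps)
  moreover have "(M n r x < n \<longleftrightarrow> z < n)" using M_half[OF r(1) assms(2)] r(2) assms(6) by simp
  ultimately have "M n r x = z" using half_unique M_half[OF r(1) assms(2)] assms(4) by blast
  then show ?thesis using r by blast
qed

lemma DLS_mem:
  assumes "is_SQS w B" "v \<noteq> x" "v < w" "x < w"
  shows "{(v,0::nat),(x,0),(y,1),(z,1)} \<in> DLS_block w B A r \<longleftrightarrow>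
         ((A r v = y \<and> A r x = z) \<or> (A r v = z \<and> A r x = y))"
proof
  let ?Q = "{(v,0::nat),(x,0),(y,1),(z,1)}"
  have Q0: "{p\<in>?Q. snd p = 0} = {(v,0),(x,0)}" by auto
  have Q1: "{p\<in>?Q. snd p = 1} = {(y,1),(z,1)}" by auto
  have c0: "card {p\<in>?Q. snd p = 0} = 2" using Q0 assms(2) by simp
  have c1: "card {p\<in>?Q. snd p = 1} \<le> 2" using Q1 by (simp add: card_insert_le_m1)
  have card3: "card ((\<lambda>t. (t, a)) ` (b - {k})) = 3" if "b \<in> B" "k \<in> b" for b k and a :: nat
  proof -
    have "card b = 4" using assms(1) that by (auto simp: is_SQS_def)
    then have "card (b - {k}) = 3" using that by (simp add: card_Diff_singleton_if)
    moreover have "inj_on (\<lambda>t. (t, a)) (b - {k})" by (auto simp: inj_on_def)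
    ultimately show ?thesis by (simp add: card_image)
  qed
  assume "?Q \<in> DLS_block w B A r"
  then have "(\<exists>b k. ?Q = (\<lambda>t. (t, 0::nat)) ` (b - {k}) \<union> {(A r k, 1)} \<and> b \<in> B \<and> k \<in> b)
     \<or> (\<exists>b k. ?Q = (\<lambda>t. (t, 1::nat)) ` (b - {k}) \<union> {(A r k, 0)} \<and> b \<in> B \<and> k \<in> b)
     \<or> (\<exists>x1 x2. ?Q = {(x1, 0), (x2, 0), (A r x1, 1), (A r x2, 1)} \<and> x1 < w \<and> x2 < w \<and> x1 \<noteq> x2)"
    unfolding DLS_block_def Un_iff mem_Collect_eq by (simp only: disj_assoc)
  then consider (t1) b k where "b \<in> B" "k \<in> b" "?Q = (\<lambda>t. (t, 0::nat)) ` (b - {k}) \<union> {(A r k, 1)}"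
    | (t2) b k where "b \<in> B" "k \<in> b" "?Q = (\<lambda>t. (t, 1::nat)) ` (b - {k}) \<union> {(A r k, 0)}"
    | (t3) x1 x2 where "?Q = {(x1, 0), (x2, 0), (A r x1, 1), (A r x2, 1)}"
    by (elim disjE exE conjE) (assumption | rule that)+
  then show "(A r v = y \<and> A r x = z) \<or> (A r v = z \<and> A r x = y)"
  proof cases
    case t1
    have "{p\<in>?Q. snd p = 0} = (\<lambda>t. (t, 0::nat)) ` (b - {k})" unfolding t1(3) by auto
    then show ?thesis using c0 card3[OF t1(1,2)] by simp
  next
    case t2
    have "{p\<in>?Q. snd p = 1} = (\<lambda>t. (t, 1::nat)) ` (b - {k})" unfolding t2(3) by auto
    then show ?thesis using c1 card3[OF t2(1,2)] by simp
  next
    case t3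
    have F0: "{p\<in>{(x1,0::nat),(x2,0),(A r x1,1::nat),(A r x2,1)}. snd p = 0} = {(x1,0),(x2,0)}" by auto
    have F1: "{p\<in>{(x1,0::nat),(x2,0),(A r x1,1::nat),(A r x2,1)}. snd p = 1} = {(A r x1,1),(A r x2,1)}" by auto
    have "{(v,0),(x,0)} = {(x1,0::nat),(x2,0)}"
      using Q0[unfolded t3] F0 by (rule trans[OF sym])
    then have "fst ` {(v,0::nat),(x,0)} = fst ` {(x1,0::nat),(x2,0)}" by (simp only:)
    then have e0: "{v,x} = {x1,x2}" by simp
    have "{(y,1),(z,1)} = {(A r x1,1::nat),(A r x2,1)}"
      using Q1[unfolded t3] F1 by (rule trans[OF sym])
    then have "fst ` {(y,1::nat),(z,1)} = fst ` {(A r x1,1::nat),(A r x2,1)}" by (simp only:)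
    then have e1: "{y,z} = {A r x1, A r x2}" by simp
    from e0 have "(v = x1 \<and> x = x2) \<or> (v = x2 \<and> x = x1)" by (simp add: doubleton_eq_iff)
    moreover from e1 have "(y = A r x1 \<and> z = A r x2) \<or> (y = A r x2 \<and> z = A r x1)" by (simp add: doubleton_eq_iff)
    ultimately show ?thesis by blast
  qed
next
  assume "(A r v = y \<and> A r x = z) \<or> (A r v = z \<and> A r x = y)"
  then show "{(v,0::nat),(x,0),(y,1),(z,1)} \<in> DLS_block w B A r"
  proof
    assume h: "A r v = y \<and> A r x = z"
    have eq: "{(v,0::nat),(x,0),(y,1),(z,1)} = {(v, 0), (x, 0), (A r v, 1::nat), (A r x, 1)}" using h by simp
    have m: "{(v, 0::nat), (x, 0), (A r v, 1::nat), (A r x, 1)} \<in> {{(x1, 0::nat), (x2, 0), (A r x1, 1::nat), (A r x2, 1)} | x1 x2.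
         x1 < w \<and> x2 < w \<and> x1 \<noteq> x2}"
      unfolding mem_Collect_eq by (rule exI[of _ v], rule exI[of _ x]) (use assms in simp)
    show ?thesis unfolding DLS_block_def eq by (rule UnI2[OF m])
  next
    assume h: "A r v = z \<and> A r x = y"
    have eq: "{(v,0::nat),(x,0),(y,1),(z,1)} = {(x, 0), (v, 0), (A r x, 1::nat), (A r v, 1)}" using h by auto
    have m: "{(x, 0::nat), (v, 0), (A r x, 1::nat), (A r v, 1)} \<in> {{(x1, 0::nat), (x2, 0), (A r x1, 1::nat), (A r x2, 1)} | x1 x2.
         x1 < w \<and> x2 < w \<and> x1 \<noteq> x2}"
      unfolding mem_Collect_eq by (rule exI[of _ x], rule exI[of _ v]) (use assms in simp)
    show ?thesis unfolding DLS_block_def eq by (rule UnI2[OF m])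
  qed
qed

lemma dvd_swap_iff: "(k::int) dvd (a - b - i) \<longleftrightarrow> k dvd (b - a + i)"
  by (subst dvd_minus_iff[symmetric]) simp

lemma memAB:
  assumes "v < x" "x < 2*n"
  shows "{v,x} \<in> A_cls n i \<union> B_cls n i \<longleftrightarrow>
     (x<n \<or> n\<le>v) \<and> (int n dvd (int x - int v - i) \<or> int n dvd (int x - int v + i))"
proof
  assume "{v,x} \<in> A_cls n i \<union> B_cls n i"
  then obtain a b where ab: "{v,x} = {a,b}" "(a<n \<and> b<n) \<or> (n\<le>a \<and> n\<le>b)" "int n dvd (int b - int a - i)"
    unfolding A_cls_def B_cls_def by (auto simp: cong_iff_dvd_diff)
  from ab(1) have "(v = a \<and> x = b) \<or> (v = b \<and> x = a)" by (auto simp: doubleton_eq_iff)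
  then show "(x<n \<or> n\<le>v) \<and> (int n dvd (int x - int v - i) \<or> int n dvd (int x - int v + i))"
    using ab(2,3) assms dvd_swap_iff[of "int n" "int v" "int x" i] by auto
next
  assume h: "(x<n \<or> n\<le>v) \<and> (int n dvd (int x - int v - i) \<or> int n dvd (int x - int v + i))"
  show "{v,x} \<in> A_cls n i \<union> B_cls n i"
  proof (cases "int n dvd (int x - int v - i)")
    case True
    then show ?thesis using h assms unfolding A_cls_def B_cls_def by (auto simp: cong_iff_dvd_diff)
  next
    case False
    then have d: "int n dvd (int v - int x - i)" using h dvd_swap_iff[of "int n" "int v" "int x" i] by auto
    have "{v,x} = {x,v}" by auto
    then show ?thesis using h assms d unfolding A_cls_def B_cls_def
      by (auto simp: cong_iff_dvd_diff)
  qed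
qed

lemma memC:
  assumes "v < x" "x < 2*n"
  shows "{v,x} \<in> C_cls n i \<longleftrightarrow> v<n \<and> n\<le>x \<and> int n dvd (int v + int x - i)"
proof
  assume "{v,x} \<in> C_cls n i"
  then obtain a b where ab: "{v,x} = {a,b}" "a<n" "n\<le>b" "int n dvd (int a + int b - i)"
    unfolding C_cls_def by (auto simp: cong_iff_dvd_diff)
  from ab(1) have "(v = a \<and> x = b) \<or> (v = b \<and> x = a)" by (auto simp: doubleton_eq_iff)
  then show "v<n \<and> n\<le>x \<and> int n dvd (int v + int x - i)" using ab assms by auto
next
  assume "v<n \<and> n\<le>x \<and> int n dvd (int v + int x - i)"
  then show "{v,x} \<in> C_cls n i" using assms unfolding C_cls_def by (auto simp: cong_iff_dvd_diff)
qed

lemma memD: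
  assumes "y < z" "z < 2*n"
  shows "{y,z} \<in> D_cls n i \<longleftrightarrow> y<n \<and> n\<le>z \<and> int n dvd (int z - int y - i)"
proof
  assume "{y,z} \<in> D_cls n i"
  then obtain a b where ab: "{y,z} = {a,b}" "a<n" "n\<le>b" "int n dvd (int b - int a - i)"
    unfolding D_cls_def by (auto simp: cong_iff_dvd_diff)
  from ab(1) have "(y = a \<and> z = b) \<or> (y = b \<and> z = a)" by (auto simp: doubleton_eq_iff)
  then show "y<n \<and> n\<le>z \<and> int n dvd (int z - int y - i)" using ab assms by auto
next
  assume "y<n \<and> n\<le>z \<and> int n dvd (int z - int y - i)"
  then show "{y,z} \<in> D_cls n i" using assms unfolding D_cls_def by (auto simp: cong_iff_dvd_diff)
qed

lemma comb_pm:
  fixes k a b i :: int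
  assumes "k dvd (a - i) \<or> k dvd (a + i)" "k dvd (b - i) \<or> k dvd (b + i)"
  shows "k dvd (b - a) \<or> k dvd (b + a)"
proof -
  have e1: "b - a = (b - i) - (a - i)" "b - a = (b + i) - (a + i)"
       "b + a = (b - i) + (a + i)" "b + a = (b + i) + (a - i)" by simp_all
  show ?thesis using assms dvd_diff[of k "b-i" "a-i"] dvd_diff[of k "b+i" "a+i"]
     dvd_add[of k "b-i" "a+i"] dvd_add[of k "b+i" "a-i"] by auto
qed

lemma condA_iff:
  assumes "odd n" "v < x" "x < 2*n" "y < z" "z < 2*n"
  shows "(\<exists>i::int. 1 \<le> i \<and> 2*i \<le> int n - 1 \<and>
               {v,x} \<in> A_cls n i \<union> B_cls n i \<and> {y,z} \<in> A_cls n i \<union> B_cls n i)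
     \<longleftrightarrow> ((x<n \<or> n\<le>v) \<and> (z<n \<or> n\<le>y) \<and>
          (int n dvd (int z - int y - (int x - int v)) \<or> int n dvd (int z - int y + (int x - int v))))"
    (is "?L \<longleftrightarrow> ?R")
proof
  assume ?L
  then obtain i where i: "{v,x} \<in> A_cls n i \<union> B_cls n i" "{y,z} \<in> A_cls n i \<union> B_cls n i" by blast
  show ?R using i[unfolded memAB[OF assms(2,3)] memAB[OF assms(4,5)]]
      comb_pm[of "int n" "int x - int v" i "int z - int y"] by auto
next
  assume R: ?R
  define a where "a = int x - int v"
  have a1: "1 \<le> a" "a < int n" using R assms(2,3) by (auto simp: a_def)
  have a2: "2*a \<noteq> int n" using assms(1)
    by (metis dvd_triv_left even_of_nat)
  define i where "i = (if 2*a \<le> int n - 1 then a else int n - a)"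
  have irange: "1 \<le> i" "2*i \<le> int n - 1" using a1 a2 by (auto simp: i_def)
  have m1: "int n dvd (a - i) \<or> int n dvd (a + i)" by (auto simp: i_def)
  have Rd: "int n dvd (int z - int y - a) \<or> int n dvd (int z - int y + a)" using R by (simp add: a_def)
  have m2: "int n dvd (int z - int y - i) \<or> int n dvd (int z - int y + i)"
  proof (cases "2*a \<le> int n - 1")
    case True then show ?thesis using Rd by (simp add: i_def)
  next
    case False
    have e: "int z - int y - a = (int z - int y + (int n - a)) - int n"
            "int z - int y + a = (int z - int y - (int n - a)) + int n" by simp_all
    show ?thesis using Rd False unfolding i_def
      using dvd_diff[of "int n" "int z - int y + a" "int n"] dvd_add[of "int n" "int z - int y - a" "int n"]
      by (auto simp: algebra_simps)
  qed
  show ?L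
    using irange m1 m2 memAB[OF assms(2,3)] memAB[OF assms(4,5)] R unfolding a_def by blast
qed

lemma condB_iff:
  assumes "v < x" "x < 2*n" "y < z" "z < 2*n" "n > 0"
  shows "(\<exists>i::int. 0 \<le> i \<and> i \<le> int n - 1 \<and>
               {v,x} \<in> C_cls n i \<and> {y,z} \<in> D_cls n (i - 1) \<union> D_cls n i)
     \<longleftrightarrow> (v<n \<and> n\<le>x \<and> y<n \<and> n\<le>z \<and>
          (int n dvd (int z - int y - (int v + int x)) \<or> int n dvd (int z - int y - (int v + int x) + 1)))"
    (is "?L \<longleftrightarrow> ?R")
proof
  assume ?L
  then obtain i where i: "{v,x} \<in> C_cls n i" "{y,z} \<in> D_cls n (i - 1) \<union> D_cls n i" by blast
  have c: "v<n" "n\<le>x" "int n dvd (int v + int x - i)" using i(1) memC[OF assms(1,2)] by auto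
  have d: "y<n" "n\<le>z" "int n dvd (int z - int y - (i - 1)) \<or> int n dvd (int z - int y - i)"
    using i(2) memD[OF assms(3,4)] by auto
  have e: "int z - int y - (int v + int x) = (int z - int y - i) - (int v + int x - i)"
       "int z - int y - (int v + int x) + 1 = (int z - int y - (i - 1)) - (int v + int x - i)" by simp_all
  from d(3) have "int n dvd (int z - int y - (i-1)) - (int v + int x - i) \<or> int n dvd (int z - int y - i) - (int v + int x - i)"
    using c(3) dvd_diff by blast
  then show ?R using c d by (auto simp: algebra_simps)
next
  assume R: ?R
  define i where "i = (int v + int x) mod int n"
  have irange: "0 \<le> i" "i \<le> int n - 1" using assms(5) by (auto simp: i_def)
  have ci: "int n dvd (int v + int x - i)" unfolding i_def
    by (metis dvd_minus_iff minus_diff_eq mod_dvd_aux)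
  have e: "int z - int y - i = (int z - int y - (int v + int x)) + (int v + int x - i)"
       "int z - int y - (i - 1) = (int z - int y - (int v + int x) + 1) + (int v + int x - i)" by simp_all
  have "int n dvd (int z - int y - (i - 1)) \<or> int n dvd (int z - int y - i)"
  proof -
    have "int n dvd (int z - int y - (int v + int x) + 1) + (int v + int x - i) \<or> int n dvd (int z - int y - (int v + int x)) + (int v + int x - i)"
      using R ci dvd_add by blast
    then show ?thesis by (auto simp: algebra_simps)
  qed
  then show ?L using irange ci R memC[OF assms(1,2)] memD[OF assms(3,4)] by blast
qed

lemma core_fwd:
  assumes "v < x" "x < 2*n" "y < z" "z < 2*n" "r < 2*n"
    "(M n r v = y \<and> M n r x = z) \<or> (M n r v = z \<and> M n r x = y)"
  shows "((x<n \<or> n\<le>v) \<and> (z<n \<or> n\<le>y) \<and>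
          (int n dvd (int z - int y - (int x - int v)) \<or> int n dvd (int z - int y + (int x - int v))))
      \<or> (v<n \<and> n\<le>x \<and> y<n \<and> n\<le>z \<and>
          (int n dvd (int z - int y - (int v + int x)) \<or> int n dvd (int z - int y - (int v + int x) + 1)))"
proof -
  have vlt: "v < 2*n" using assms by simp
  have D: "int n dvd ((int (M n r x) - phi n r x) - (int (M n r v) - phi n r v))"
    using dvd_diff[OF M_cong[OF assms(5,2)] M_cong[OF assms(5) vlt]] .
  have hv: "M n r v < n \<longleftrightarrow> (r<n \<longleftrightarrow> v<n)" using M_half[OF assms(5) vlt] by simp
  have hx: "M n r x < n \<longleftrightarrow> (r<n \<longleftrightarrow> x<n)" using M_half[OF assms(5,2)] by simp
  from assms(6) show ?thesis
  proof
    assume e: "M n r v = y \<and> M n r x = z"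
    then have D1: "int n dvd (int z - int y - (phi n r x - phi n r v))" using D by (simp add: algebra_simps)
    have hy: "y < n \<longleftrightarrow> (r<n \<longleftrightarrow> v<n)" and hz: "z < n \<longleftrightarrow> (r<n \<longleftrightarrow> x<n)" using e hv hx by auto
    show ?thesis using D1 hy hz assms(1,3)
      by (cases "r<n"; cases "v<n"; cases "x<n") (auto simp: phi_def algebra_simps)
  next
    assume e: "M n r v = z \<and> M n r x = y"
    then have D1: "int n dvd (int y - int z - (phi n r x - phi n r v))" using D by (simp add: algebra_simps)
    then have D2: "int n dvd (int z - int y + (phi n r x - phi n r v))"
      using dvd_swap_iff[of "int n" "int y" "int z"] by simp
    have hy: "z < n \<longleftrightarrow> (r<n \<longleftrightarrow> v<n)" and hz: "y < n \<longleftrightarrow> (r<n \<longleftrightarrow> x<n)" using e hv hx by auto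
    show ?thesis using D2 hy hz assms(1,3)
      by (cases "r<n"; cases "v<n"; cases "x<n") (auto simp: phi_def algebra_simps)
  qed
qed

lemma core_bwd:
  assumes "v < x" "x < 2*n" "y < z" "z < 2*n"
    and H: "((x<n \<or> n\<le>v) \<and> (z<n \<or> n\<le>y) \<and>
          (int n dvd (int z - int y - (int x - int v)) \<or> int n dvd (int z - int y + (int x - int v))))
      \<or> (v<n \<and> n\<le>x \<and> y<n \<and> n\<le>z \<and>
          (int n dvd (int z - int y - (int v + int x)) \<or> int n dvd (int z - int y - (int v + int x) + 1)))"
  shows "\<exists>r<2*n. (M n r v = y \<and> M n r x = z) \<or> (M n r v = z \<and> M n r x = y)"
proof -
  have vlt: "v < 2*n" and ylt: "y < 2*n" using assms by simp_all
  from H show ?thesis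
  proof
    assume CA: "(x<n \<or> n\<le>v) \<and> (z<n \<or> n\<le>y) \<and>
          (int n dvd (int z - int y - (int x - int v)) \<or> int n dvd (int z - int y + (int x - int v)))"
    define hr where "hr = (y<n \<longleftrightarrow> v<n)"
    define s where "s = (if y<n then int v - int x else int x - int v)"
    have hvx: "v<n \<longleftrightarrow> x<n" and hyz: "y<n \<longleftrightarrow> z<n" using CA assms by auto
    have ps: "phi n r x - phi n r v = s" if "r<n \<longleftrightarrow> hr" for r
      using that hvx hyz unfolding hr_def s_def
      by (cases "r<n"; cases "v<n"; cases "y<n") (auto simp: phi_def)
    have CA': "int n dvd (int z - int y - s) \<or> int n dvd (int z - int y + s)"
      using CA by (auto simp: s_def algebra_simps)
    show ?thesis
    proof (cases "int n dvd (int z - int y - s)")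
      case True
      have "\<exists>r<2*n. M n r v = y \<and> M n r x = z"
        by (rule pair_exists[where hr=hr]) (use assms vlt ylt hvx hyz True ps in \<open>auto simp: hr_def\<close>)
      then show ?thesis by blast
    next
      case False
      then have d: "int n dvd (int y - int z - s)" using CA' dvd_swap_iff[of "int n" "int y" "int z" s] by auto
      have "\<exists>r<2*n. M n r v = z \<and> M n r x = y"
        by (rule pair_exists[where hr=hr]) (use assms vlt ylt hvx hyz d ps in \<open>auto simp: hr_def\<close>)
      then show ?thesis by blast
    qed
  next
    assume CB: "v<n \<and> n\<le>x \<and> y<n \<and> n\<le>z \<and>
          (int n dvd (int z - int y - (int v + int x)) \<or> int n dvd (int z - int y - (int v + int x) + 1))"
    show ?thesis
    proof (cases "int n dvd (int z - int y - (int v + int x))")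
      case True
      have ps: "phi n r x - phi n r v = int v + int x" if "r<n" for r
        using that CB by (auto simp: phi_def)
      have "\<exists>r<2*n. M n r v = y \<and> M n r x = z"
        by (rule pair_exists[where hr=True]) (use assms vlt ylt CB True ps in auto)
      then show ?thesis by blast
    next
      case False
      then have d0: "int n dvd (int z - int y - (int v + int x) + 1)" using CB by auto
      have d: "int n dvd (int y - int z - (1 - int v - int x))"
        using d0 dvd_minus_iff[of "int n" "int z - int y - (int v + int x) + 1"] by (simp add: algebra_simps)
      have ps: "phi n r x - phi n r v = 1 - int v - int x" if "\<not> r<n" for r
        using that CB by (auto simp: phi_def)
      have "\<exists>r<2*n. M n r v = z \<and> M n r x = y"
        by (rule pair_exists[where hr=False]) (use assms vlt ylt CB d ps in auto)
      then show ?thesis by blast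
    qed
  qed
qed

lemma P_unique:
  assumes "odd n" "n > 1" "v < 2*n" "x < 2*n" "v \<noteq> x" "r < 2*n" "r' < 2*n"
    "(M n r v = y \<and> M n r x = z) \<or> (M n r v = z \<and> M n r x = y)"
    "(M n r' v = y \<and> M n r' x = z) \<or> (M n r' v = z \<and> M n r' x = y)"
  shows "r = r'"
proof -
  have ci: "M n r v = M n r' v \<Longrightarrow> r = r'" using col_inj[OF assms(6,7,3)] .
  have ni: "M n r v = M n r' x \<Longrightarrow> M n r x = M n r' v \<Longrightarrow> False"
    using no_intercalate[OF assms(1,2,6,7,3,4,5)] .
  from assms(8) show ?thesis
  proof
    assume a: "M n r v = y \<and> M n r x = z"
    from assms(9) show ?thesis
    proof
      assume "M n r' v = y \<and> M n r' x = z" then show ?thesis using a ci by simp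
    next
      assume "M n r' v = z \<and> M n r' x = y" then show ?thesis using a ni by simp
    qed
  next
    assume a: "M n r v = z \<and> M n r x = y"
    from assms(9) show ?thesis
    proof
      assume "M n r' v = y \<and> M n r' x = z" then show ?thesis using a ni by simp
    next
      assume "M n r' v = z \<and> M n r' x = y" then show ?thesis using a ci by simp
    qed
  qed
qed

lemma main_ordered:
  fixes n :: nat and B :: "nat set set" and v x y z :: nat
  assumes "odd n"
    and "n > 1"
    and "is_SQS (2*n) B"
    and "v < x" "x < 2*n" "y < z" "z < 2*n"
  shows "({(v,0),(x,0),(y,1),(z,1)} \<in> (\<Union>r<2*n. DLS_block (2*n) B (M n) r)
           \<longleftrightarrow>
          ((\<exists>i::int. 1 \<le> i \<and> 2*i \<le> int n - 1 \<and>
               {v,x} \<in> A_cls n i \<union> B_cls n i \<and> {y,z} \<in> A_cls n i \<union> B_cls n i)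
           \<or> (\<exists>i::int. 0 \<le> i \<and> i \<le> int n - 1 \<and>
               {v,x} \<in> C_cls n i \<and> {y,z} \<in> D_cls n (i - 1) \<union> D_cls n i)))
       \<and> ({(v,0),(x,0),(y,1),(z,1)} \<in> (\<Union>r<2*n. DLS_block (2*n) B (M n) r)
           \<longrightarrow> (\<exists>!r. r < 2*n \<and> {(v,0),(x,0),(y,1),(z,1)} \<in> DLS_block (2*n) B (M n) r))"
proof -
  have vlt: "v < 2*n" and vx: "v \<noteq> x" using assms by simp_all
  note mem = DLS_mem[OF assms(3) vx vlt assms(5), of y z "M n"]
  have U: "{(v,0),(x,0),(y,1),(z,1)} \<in> (\<Union>r<2*n. DLS_block (2*n) B (M n) r) \<longleftrightarrow>
     (\<exists>r<2*n. (M n r v = y \<and> M n r x = z) \<or> (M n r v = z \<and> M n r x = y))"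
    using mem by blast
  have I: "(\<exists>r<2*n. (M n r v = y \<and> M n r x = z) \<or> (M n r v = z \<and> M n r x = y)) \<longleftrightarrow>
     ((x<n \<or> n\<le>v) \<and> (z<n \<or> n\<le>y) \<and>
          (int n dvd (int z - int y - (int x - int v)) \<or> int n dvd (int z - int y + (int x - int v))))
      \<or> (v<n \<and> n\<le>x \<and> y<n \<and> n\<le>z \<and>
          (int n dvd (int z - int y - (int v + int x)) \<or> int n dvd (int z - int y - (int v + int x) + 1)))"
    using core_fwd[OF assms(4-7)] core_bwd[OF assms(4-7)] by blast
  have n0: "n > 0" using assms by simp
  show ?thesis
  proof
    show "({(v,0),(x,0),(y,1),(z,1)} \<in> (\<Union>r<2*n. DLS_block (2*n) B (M n) r)
           \<longleftrightarrow>
          ((\<exists>i::int. 1 \<le> i \<and> 2*i \<le> int n - 1 \<and>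
               {v,x} \<in> A_cls n i \<union> B_cls n i \<and> {y,z} \<in> A_cls n i \<union> B_cls n i)
           \<or> (\<exists>i::int. 0 \<le> i \<and> i \<le> int n - 1 \<and>
               {v,x} \<in> C_cls n i \<and> {y,z} \<in> D_cls n (i - 1) \<union> D_cls n i)))"
      unfolding U I condA_iff[OF assms(1,4-7)] condB_iff[OF assms(4-7) n0] ..
  next
    show "{(v,0),(x,0),(y,1),(z,1)} \<in> (\<Union>r<2*n. DLS_block (2*n) B (M n) r)
           \<longrightarrow> (\<exists>!r. r < 2*n \<and> {(v,0),(x,0),(y,1),(z,1)} \<in> DLS_block (2*n) B (M n) r)"
    proof
      assume "{(v,0),(x,0),(y,1),(z,1)} \<in> (\<Union>r<2*n. DLS_block (2*n) B (M n) r)"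
      then obtain r where r: "r < 2*n" "(M n r v = y \<and> M n r x = z) \<or> (M n r v = z \<and> M n r x = y)"
        using U by blast
      show "\<exists>!r. r < 2*n \<and> {(v,0),(x,0),(y,1),(z,1)} \<in> DLS_block (2*n) B (M n) r"
      proof (rule ex1I[of _ r])
        show "r < 2*n \<and> {(v,0),(x,0),(y,1),(z,1)} \<in> DLS_block (2*n) B (M n) r" using r mem by blast
      next
        fix r' assume "r' < 2*n \<and> {(v,0),(x,0),(y,1),(z,1)} \<in> DLS_block (2*n) B (M n) r'"
        then show "r' = r" using P_unique[OF assms(1,2) vlt assms(5) vx r(1), of r' y z] r(2) mem by blast
      qed
    qed
  qed
qed

theorem lemma2:
  fixes n :: nat and B :: "nat set set" and v x y z :: nat
  assumes "n mod 6 = 1 \<or> n mod 6 = 5"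
    and "n > 1"
    and "is_SQS (2*n) B"
    and "v < 2*n" "x < 2*n" "y < 2*n" "z < 2*n"
    and "v \<noteq> x" "y \<noteq> z"
  shows "({(v,0),(x,0),(y,1),(z,1)} \<in> (\<Union>r<2*n. DLS_block (2*n) B (M n) r)
           \<longleftrightarrow>
          ((\<exists>i::int. 1 \<le> i \<and> 2*i \<le> int n - 1 \<and>
               {v,x} \<in> A_cls n i \<union> B_cls n i \<and> {y,z} \<in> A_cls n i \<union> B_cls n i)
           \<or> (\<exists>i::int. 0 \<le> i \<and> i \<le> int n - 1 \<and>
               {v,x} \<in> C_cls n i \<and> {y,z} \<in> D_cls n (i - 1) \<union> D_cls n i)))
       \<and> ({(v,0),(x,0),(y,1),(z,1)} \<in> (\<Union>r<2*n. DLS_block (2*n) B (M n) r)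
           \<longrightarrow> (\<exists>!r. r < 2*n \<and> {(v,0),(x,0),(y,1),(z,1)} \<in> DLS_block (2*n) B (M n) r))"
proof -
  have odd: "odd n" using assms(1) by presburger
  have s1: "{(x,0::nat),(v,0),(y,1::nat),(z,1)} = {(v,0),(x,0),(y,1),(z,1)}" by auto
  have s2: "{(v,0::nat),(x,0),(z,1::nat),(y,1)} = {(v,0),(x,0),(y,1),(z,1)}" by auto
  have s3: "{(x,0::nat),(v,0),(z,1::nat),(y,1)} = {(v,0),(x,0),(y,1),(z,1)}" by auto
  have s4: "{x,v} = {v,x}" "{z,y} = {y,z}" by auto
  consider "v < x" "y < z" | "x < v" "y < z" | "v < x" "z < y" | "x < v" "z < y"
    using assms(8,9) by (meson linorder_neqE_nat)
  then show ?thesis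
  proof cases
    case 1 then show ?thesis using main_ordered[OF odd assms(2,3), of v x y z] assms by blast
  next
    case 2 then show ?thesis using main_ordered[OF odd assms(2,3), of x v y z] assms
      unfolding s1 s4 by blast
  next
    case 3 then show ?thesis using main_ordered[OF odd assms(2,3), of v x z y] assms
      unfolding s2 s4 by blast
  next
    case 4 then show ?thesis using main_ordered[OF odd assms(2,3), of x v z y] assms
      unfolding s3 s4 by blast
  qed
qed

end
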